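(* Let $G=(V,E)$ be a simple undirected graph on $n$ nodes, let $0<\epsilon<\frac13$ and $\delta>0$, and let $D\subseteq V$ be an $\epsilon^3$-near clique with $|D|\ge\delta n$. Let $C=K_{\epsilon^2}(D)\cap D$. Then $|C|\ge(1-\epsilon)|D|-\frac{1}{\epsilon^2}$.
   Context: $\Gamma(v)$ denotes the set of neighbors of $v$. For $Y\subseteq V$ and $0\le\eta\le1$: $K_\eta(Y)=\{v\in V: |\Gamma(v)\cap Y|\ge(1-\eta)|Y|\}$. Each undirected edge $\{u,v\}$ is counted as two directed edges; a set $D\subseteq V$ is a $\gamma$-near clique if $|\{(u,v)\in D\times D:\{u,v\}\in E\}|\ge(1-\gamma)|D|(|D|-1)$. *)

theory Defs
  imports Main Complex_Main
begin

definition simple_graph :: "'a set \<Rightarrow> ('a \<Rightarrow> 'a \<Rightarrow> bool) \<Rightarrow> bool" where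
  "simple_graph V E \<longleftrightarrow> finite V \<and> (\<forall>u v. E u v \<longrightarrow> E v u)
     \<and> (\<forall>v. \<not> E v v) \<and> (\<forall>u v. E u v \<longrightarrow> u \<in> V \<and> v \<in> V)"

definition nbrs :: "'a set \<Rightarrow> ('a \<Rightarrow> 'a \<Rightarrow> bool) \<Rightarrow> 'a \<Rightarrow> 'a set" where
  "nbrs V E v = {u \<in> V. E v u}"

definition K_set :: "'a set \<Rightarrow> ('a \<Rightarrow> 'a \<Rightarrow> bool) \<Rightarrow> real \<Rightarrow> 'a set \<Rightarrow> 'a set" where
  "K_set V E eta Y = {v \<in> V. real (card (nbrs V E v \<inter> Y)) \<ge> (1 - eta) * real (card Y)}"

text \<open>Number of directed edges inside D (each undirected edge counted twice).\<close>
definition dir_edges :: "('a \<Rightarrow> 'a \<Rightarrow> bool) \<Rightarrow> 'a set \<Rightarrow> nat" where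
  "dir_edges E D = card {(u, v). u \<in> D \<and> v \<in> D \<and> E u v}"

definition near_clique :: "'a set \<Rightarrow> ('a \<Rightarrow> 'a \<Rightarrow> bool) \<Rightarrow> real \<Rightarrow> 'a set \<Rightarrow> bool" where
  "near_clique V E gamma D \<longleftrightarrow> D \<subseteq> V \<and>
     real (dir_edges E D) \<ge> (1 - gamma) * real (card D) * (real (card D) - 1)"

end

theory Submission
  imports Defs
begin

lemma arith_core:
  fixes e d b :: real
  assumes e: "0 < e" "e < 1/3" and b: "0 \<le> b" "b \<le> d"
    and h: "(1 - e^3) * d * (d - 1) \<le> (d - b) * (d - 1) + b * ((1 - e^2) * d)"
  shows "b \<le> e * d + 1 / e^2"
proof (cases "d \<le> e * d + 1 / e^2")
  case True thus ?thesis using b by linarith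
next
  case False
  have e2: "e^2 > 0" using e by simp
  have k: "(1 - e) * d * e^2 > 1"
  proof -
    have "(1-e)*d > 1/e^2" using False by (simp add: algebra_simps)
    hence "(1-e)*d*e^2 > (1/e^2)*e^2" using e2 by (intro mult_strict_right_mono) auto
    thus ?thesis using e2 by simp
  qed
  have h2: "b * (e^2 * d - 1) \<le> e^3 * d * (d - 1)" using h by (simp add: algebra_simps)
  show ?thesis
  proof (rule ccontr)
    assume "\<not> ?thesis"
    hence "b * e^2 > (e * d + 1 / e^2) * e^2" using e2 by (intro mult_strict_right_mono) auto
    moreover have "(e * d + 1 / e^2) * e^2 = e^3 * d + 1" using e2 e
      by (simp add: field_simps power3_eq_cube power2_eq_square)
    ultimately have nb: "b * e^2 > e^3 * d + 1" by simp
    have d0: "d \<ge> 0" using b by linarith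
    have "e*d*e^2 \<ge> 0" using e d0 by simp
    moreover have "(1-e)*d*e^2 = e^2 * d - e*d*e^2" by (simp add: algebra_simps)
    ultimately have pos: "e^2 * d - 1 > 0" using k by linarith
    have "b * e^2 * (e^2 * d - 1) > (e^3 * d + 1) * (e^2 * d - 1)"
      using nb pos by (intro mult_strict_right_mono) auto
    moreover have "b * e^2 * (e^2 * d - 1) \<le> e^2 * (e^3 * d * (d - 1))"
      using mult_left_mono[OF h2, of "e^2"] e2 by (simp add: ac_simps)
    ultimately have "(e^3 * d + 1) * (e^2 * d - 1) < e^2 * (e^3 * d * (d - 1))" by linarith
    hence "e^2 * d - e^3*d - 1 + e^5 * d < 0" by (simp add: algebra_simps power_numeral_reduce)
    moreover have "e^5 * d \<ge> 0" using e d0 by simp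
    moreover have "e^2 * d - e^3*d > 1" using k by (simp add: algebra_simps power_numeral_reduce)
    ultimately show False by linarith
  qed
qed

theorem lemma5p4:
  fixes V :: "'a set" and E :: "'a \<Rightarrow> 'a \<Rightarrow> bool" and D :: "'a set"
    and n :: nat and \<epsilon> \<delta> :: real
  assumes "simple_graph V E"
    and "n = card V"
    and "0 < \<epsilon>" and "\<epsilon> < 1/3" and "\<delta> > 0"
    and "near_clique V E (\<epsilon>^3) D"
    and "real (card D) \<ge> \<delta> * real n"
  shows "real (card (K_set V E (\<epsilon>^2) D \<inter> D)) \<ge> (1 - \<epsilon>) * real (card D) - 1 / \<epsilon>^2"
proof -
  have DV: "D \<subseteq> V" and fV: "finite V"
    using assms(1,6) unfolding near_clique_def simple_graph_def by auto
  have irr: "\<And>v. \<not> E v v" using assms(1) unfolding simple_graph_def by auto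
  have fD: "finite D" using DV fV finite_subset by auto
  define d where "d = real (card D)"
  define f where "f u = real (card (nbrs V E u \<inter> D))" for u
  define C where "C = K_set V E (\<epsilon>^2) D \<inter> D"
  have CD: "C \<subseteq> D" unfolding C_def by auto
  have "{(u, v). u \<in> D \<and> v \<in> D \<and> E u v} = Sigma D (\<lambda>u. nbrs V E u \<inter> D)"
    using DV unfolding nbrs_def by auto
  hence "dir_edges E D = (\<Sum>u\<in>D. card (nbrs V E u \<inter> D))"
    unfolding dir_edges_def using fD by (simp add: card_SigmaI)
  hence de: "real (dir_edges E D) = (\<Sum>u\<in>D. f u)" unfolding f_def by simp
  have f1: "f u \<le> d - 1" if "u \<in> D" for u
  proof -
    have "nbrs V E u \<inter> D \<subseteq> D - {u}" using irr unfolding nbrs_def by auto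
    hence "card (nbrs V E u \<inter> D) \<le> card (D - {u})" using fD by (intro card_mono) auto
    moreover have "card (D - {u}) = card D - 1" using that fD by simp
    moreover have "card D \<noteq> 0" using that fD by auto
    ultimately have "real (card (nbrs V E u \<inter> D)) \<le> real (card D) - 1" by linarith
    thus ?thesis unfolding f_def d_def .
  qed
  have f2: "f u < (1 - \<epsilon>^2) * d" if "u \<in> D - C" for u
    using that DV unfolding C_def K_set_def f_def d_def by auto
  have "(\<Sum>u\<in>D. f u) = (\<Sum>u\<in>C. f u) + (\<Sum>u\<in>D-C. f u)"
    using fD CD by (metis add.commute sum.subset_diff)
  also have "\<dots> \<le> (\<Sum>u\<in>C. d - 1) + (\<Sum>u\<in>D-C. (1 - \<epsilon>^2) * d)"
    using f1 f2 CD by (intro add_mono sum_mono) (auto intro: less_imp_le)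
  also have "\<dots> = real (card C) * (d - 1) + real (card (D - C)) * ((1 - \<epsilon>^2) * d)" by simp
  finally have s: "(\<Sum>u\<in>D. f u) \<le> real (card C) * (d - 1) + real (card (D - C)) * ((1 - \<epsilon>^2) * d)" .
  have cdc: "real (card (D - C)) = d - real (card C)"
    unfolding d_def using fD CD by (simp add: card_Diff_subset finite_subset card_mono of_nat_diff)
  have nc: "(1 - \<epsilon>^3) * d * (d - 1) \<le> real (dir_edges E D)"
    using assms(6) unfolding near_clique_def d_def by simp
  have cle: "real (card C) \<le> d" unfolding d_def using fD CD card_mono by auto
  have "real (card (D - C)) \<le> \<epsilon> * d + 1 / \<epsilon>^2"
    apply (rule arith_core[OF assms(3,4)])
    using cdc cle nc de s by auto
  hence "d - real (card C) \<le> \<epsilon> * d + 1 / \<epsilon>^2" using cdc by simp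
  hence "real (card C) \<ge> (1 - \<epsilon>) * d - 1 / \<epsilon>^2" by (simp add: algebra_simps)
  thus ?thesis unfolding C_def d_def .
qed

end
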